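(* Let $\tau\in(0,1)$, $C>\tau$, $\mu>0$, let $a:\mathbb{R}^+\to\mathbb{R}^+$ be continuous and bounded, $h(x)=\frac{x}{1+x}$, and $$d_1(t)=\mu\frac{t+C}{1-\tau},\qquad \beta(t)=\frac{t+C+1-\tau}{t+C}\Big(d_1(t)-\frac{1}{t+C}\Big).$$ Then the system $$x_1'(t)=-(a(t)+d_1(t))x_1(t)+a(t)x_2(t)+\beta(t)h(x_1(t-\tau)),\quad x_2'(t)=-(a(t)+d_1(t))x_2(t)+a(t)x_1(t)+\beta(t)h(x_2(t-\tau))$$ has the solution $x(t)=\big(\frac{1}{t+C},\frac{1}{t+C}\big)$, hence is not permanent, although $\beta(t)-d_1(t)\ge\mu/2$ for all sufficiently large $t$ (and $\beta$ is unbounded).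
   Context: Solutions are considered for $t\ge0$ with initial data on $[-\tau,0]$. *)

theory Defs
  imports "HOL-Analysis.Analysis"
begin

definition hfun :: "real \<Rightarrow> real" where
  "hfun x = x / (1 + x)"

definition d1 :: "real \<Rightarrow> real \<Rightarrow> real \<Rightarrow> real \<Rightarrow> real" where
  "d1 \<mu> \<tau> C t = \<mu> * (t + C) / (1 - \<tau>)"

definition beta :: "real \<Rightarrow> real \<Rightarrow> real \<Rightarrow> real \<Rightarrow> real" where
  "beta \<mu> \<tau> C t = (t + C + 1 - \<tau>) / (t + C) * (d1 \<mu> \<tau> C t - 1 / (t + C))"

definition is_solution ::
  "(real \<Rightarrow> real) \<Rightarrow> real \<Rightarrow> real \<Rightarrow> real \<Rightarrow> (real \<Rightarrow> real) \<Rightarrow> (real \<Rightarrow> real) \<Rightarrow> bool" where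
  "is_solution a \<mu> \<tau> C x1 x2 \<longleftrightarrow>
     continuous_on {-\<tau>..} x1 \<and> continuous_on {-\<tau>..} x2 \<and>
     (\<forall>t\<ge>0.
        (x1 has_real_derivative
           (-(a t + d1 \<mu> \<tau> C t) * x1 t + a t * x2 t + beta \<mu> \<tau> C t * hfun (x1 (t - \<tau>))))
          (at t within {0..}) \<and>
        (x2 has_real_derivative
           (-(a t + d1 \<mu> \<tau> C t) * x2 t + a t * x1 t + beta \<mu> \<tau> C t * hfun (x2 (t - \<tau>))))
          (at t within {0..}))"

definition permanent ::
  "(real \<Rightarrow> real) \<Rightarrow> real \<Rightarrow> real \<Rightarrow> real \<Rightarrow> bool" where
  "permanent a \<mu> \<tau> C \<longleftrightarrow>
     (\<exists>m M. 0 < m \<and> m \<le> M \<and>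
        (\<forall>x1 x2. is_solution a \<mu> \<tau> C x1 x2 \<and> (\<forall>s\<in>{-\<tau>..0}. x1 s > 0 \<and> x2 s > 0) \<longrightarrow>
           (\<forall>\<^sub>F t in at_top. m \<le> x1 t \<and> x1 t \<le> M \<and> m \<le> x2 t \<and> x2 t \<le> M)))"

end

theory Submission
  imports Defs
begin

lemma diff_formula:
  fixes \<tau> C \<mu> t :: real
  assumes "\<tau> < 1" "t + C > 0"
  shows "beta \<mu> \<tau> C t - d1 \<mu> \<tau> C t = \<mu> - (t + C + 1 - \<tau>) / (t + C)^2"
proof -
  define u where "u = t + C"
  define D where "D = d1 \<mu> \<tau> C t"
  have n: "1 - \<tau> \<noteq> 0" "u \<noteq> 0" using assms u_def by auto
  have D: "D * (1 - \<tau>) = \<mu> * u" using n unfolding D_def d1_def u_def by simp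
  have "beta \<mu> \<tau> C t = (u + 1 - \<tau>) / u * (D - 1 / u)"
    unfolding beta_def D_def u_def by (simp add: add.assoc)
  also have "\<dots> = D + D * (1 - \<tau>) / u - (u + 1 - \<tau>) / u^2"
    using n by (simp add: field_simps power2_eq_square)
  also have "\<dots> = D + \<mu> - (u + 1 - \<tau>) / u^2" using D n by simp
  finally show ?thesis unfolding D_def u_def by simp
qed

lemma ev_bound:
  fixes \<tau> C \<mu> t :: real
  assumes "0 < \<tau>" "\<tau> < 1" "\<mu> > 0" "t + C \<ge> 1" "t + C \<ge> 4 / \<mu>"
  shows "beta \<mu> \<tau> C t - d1 \<mu> \<tau> C t \<ge> \<mu> / 2"
proof -
  define u where "u = t + C"
  have u1: "u \<ge> 1" and u2: "u \<ge> 4/\<mu>" using assms u_def by auto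
  have "(u + 1 - \<tau>) / u^2 \<le> 2 / u"
  proof -
    have up: "u > 0" using u1 by simp
    have "(u + 1 - \<tau>) / u^2 \<le> (2 * u) / u^2"
      using u1 assms up by (intro divide_right_mono) auto
    also have "\<dots> = 2 / u" using up by (simp add: power2_eq_square)
    finally show ?thesis .
  qed
  moreover have "2 / u \<le> \<mu> / 2"
    using u1 u2 assms by (simp add: field_simps)
  ultimately have "(t + C + 1 - \<tau>) / (t + C)^2 \<le> \<mu> / 2" unfolding u_def by linarith
  then show ?thesis
    using diff_formula[of \<tau> t C \<mu>] assms by linarith
qed

theorem mainTheorem11:
  fixes \<tau> C \<mu> :: real and a :: "real \<Rightarrow> real"
  assumes "0 < \<tau>" "\<tau> < 1" "C > \<tau>" "\<mu> > 0"
    and "continuous_on {0..} a" "\<forall>t\<ge>0. a t > 0" "bounded (a ` {0..})"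
  shows "is_solution a \<mu> \<tau> C (\<lambda>t. 1 / (t + C)) (\<lambda>t. 1 / (t + C))
    \<and> (\<forall>s\<in>{-\<tau>..0}. 1 / (s + C) > 0)
    \<and> ((\<lambda>t. 1 / (t + C)) \<longlongrightarrow> 0) at_top
    \<and> \<not> permanent a \<mu> \<tau> C
    \<and> (\<forall>\<^sub>F t in at_top. beta \<mu> \<tau> C t - d1 \<mu> \<tau> C t \<ge> \<mu> / 2)
    \<and> \<not> bdd_above (beta \<mu> \<tau> C ` {0..})"
proof -
  have sol: "is_solution a \<mu> \<tau> C (\<lambda>t. 1 / (t + C)) (\<lambda>t. 1 / (t + C))"
  proof -
    have cont: "continuous_on {-\<tau>..} (\<lambda>t. 1 / (t + C))"
      by (rule continuous_on_divide) (use assms in \<open>auto intro!: continuous_intros\<close>)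
    have der: "((\<lambda>t. 1 / (t + C)) has_real_derivative
           (-(a t + d1 \<mu> \<tau> C t) * (1/(t+C)) + a t * (1/(t+C)) + beta \<mu> \<tau> C t * hfun (1 / (t - \<tau> + C))))
          (at t within {0..})" if t: "t \<ge> 0" for t
    proof -
      have p: "t + C > 0" "t - \<tau> + C > 0" using t assms by auto
      have d: "((\<lambda>t. 1 / (t + C)) has_real_derivative (- 1 / (t+C)^2)) (at t)"
        using p by (auto intro!: derivative_eq_intros simp: power2_eq_square)
      have h: "hfun (1 / (t - \<tau> + C)) = 1 / (t + C + 1 - \<tau>)"
        using p by (simp add: hfun_def field_simps)
      have e: "-(a t + d1 \<mu> \<tau> C t) * (1/(t+C)) + a t * (1/(t+C)) + beta \<mu> \<tau> C t * hfun (1 / (t - \<tau> + C))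
            = - 1 / (t+C)^2"
      proof -
        define u where "u = t + C"
        define D where "D = d1 \<mu> \<tau> C t"
        have q: "u > 0" "u + 1 - \<tau> > 0" using p assms u_def by auto
        have "beta \<mu> \<tau> C t * (1 / (t + C + 1 - \<tau>)) = (u + 1 - \<tau>) / u * (D - 1 / u) * (1 / (u + 1 - \<tau>))"
          unfolding beta_def D_def u_def by (simp add: add.assoc)
        also have "\<dots> = (D - 1/u) / u * ((u + 1 - \<tau>) / (u + 1 - \<tau>))" by simp
        also have "\<dots> = (D - 1/u) / u" using q by simp
        finally have b: "beta \<mu> \<tau> C t * (1 / (t + C + 1 - \<tau>)) = (D - 1/u) / u" .
        have "-(a t + D) * (1/u) + a t * (1/u) + (D - 1/u) / u = - 1 / u^2"
          using q by (simp add: field_simps power2_eq_square)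
        then show ?thesis unfolding h b by (simp add: u_def D_def)
      qed
      show ?thesis unfolding e by (rule has_field_derivative_at_within[OF d])
    qed
    show ?thesis unfolding is_solution_def using cont der
      by (simp add: algebra_simps)
  qed
  have pos: "\<forall>s\<in>{-\<tau>..0}. 1 / (s + C) > 0" using assms by auto
  have lim: "((\<lambda>t. 1 / (t + C)) \<longlongrightarrow> 0) at_top"
  proof -
    have "filterlim (\<lambda>t. t + C) at_top (at_top :: real filter)"
      using filterlim_tendsto_add_at_top[OF tendsto_const filterlim_ident, of C]
      by (simp add: add.commute)
    then have "((\<lambda>t. inverse (t + C)) \<longlongrightarrow> 0) at_top"
      by (rule tendsto_inverse_0_at_top)
    then show ?thesis by (simp add: inverse_eq_divide)
  qed
  have np: "\<not> permanent a \<mu> \<tau> C"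
  proof
    assume "permanent a \<mu> \<tau> C"
    then obtain m M where m: "0 < m" and
      E: "\<forall>\<^sub>F t in at_top. m \<le> 1/(t+C) \<and> 1/(t+C) \<le> M \<and> m \<le> 1/(t+C) \<and> 1/(t+C) \<le> M"
      unfolding permanent_def using sol pos by blast
    have "\<forall>\<^sub>F t in at_top. 1/(t+C) < m"
      using order_tendstoD(2)[OF lim m] .
    note c = eventually_conj[OF E this]
    have "\<forall>\<^sub>F (t::real) in at_top. False"
      by (rule eventually_mono[OF c]) auto
    then show False by simp
  qed
  define T where "T = max 1 (4 / \<mu>) - C"
  have ev_all: "\<And>t. t \<ge> T \<Longrightarrow> beta \<mu> \<tau> C t - d1 \<mu> \<tau> C t \<ge> \<mu> / 2"
    using ev_bound assms unfolding T_def by force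
  have ev: "\<forall>\<^sub>F t in at_top. beta \<mu> \<tau> C t - d1 \<mu> \<tau> C t \<ge> \<mu> / 2"
    using ev_all eventually_at_top_linorder by blast
  have nb: "\<not> bdd_above (beta \<mu> \<tau> C ` {0..})"
  proof
    assume "bdd_above (beta \<mu> \<tau> C ` {0..})"
    then obtain B where B: "\<And>t. t \<ge> 0 \<Longrightarrow> beta \<mu> \<tau> C t \<le> B"
      unfolding bdd_above_def by auto
    define t where "t = max 0 (max T (\<bar>B\<bar> * (1 - \<tau>) / \<mu> - C + 1))"
    have t0: "t \<ge> 0" and tT: "t \<ge> T" and tB: "t \<ge> \<bar>B\<bar> * (1 - \<tau>) / \<mu> - C + 1"
      unfolding t_def by auto
    have "\<bar>B\<bar> * (1 - \<tau>) / \<mu> < t + C" using tB by linarith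
    then have "\<bar>B\<bar> * (1 - \<tau>) < \<mu> * (t + C)" using assms by (simp add: field_simps)
    then have "\<bar>B\<bar> < d1 \<mu> \<tau> C t" using assms unfolding d1_def by (simp add: field_simps)
    moreover have "d1 \<mu> \<tau> C t < beta \<mu> \<tau> C t" using ev_all[OF tT] assms by linarith
    moreover have "beta \<mu> \<tau> C t \<le> B" using B t0 .
    ultimately show False by linarith
  qed
  show ?thesis using sol pos lim np ev nb by blast
qed

end
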